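(* There exists an anonymous hedonic game with $n=7$ agents having strict and generally single-peaked preferences such that there is an infinite sequence of IS deviations starting from the singleton partition, and there is also an infinite sequence of IS deviations starting from the grand coalition $\{N\}$.
   Context: A hedonic game on agent set $N=[n]$ assigns to each agent $i$ a weak order $\succsim_i$ over coalitions containing $i$. In an anonymous hedonic game (AHG), each agent $i$ has a weak order $\succsim_i^S$ over sizes $\{1,\dots,n\}$ and coalitions are compared only via their sizes. Preferences are strict if these orders are linear. An AHG is generally single-peaked if there is a linear order $>$ on $[n]$ such that for every agent $i$ and all $x,y,z$ with $x>y>z$ or $z>y>x$, $x\succ_i^S y$ implies $y\succsim_i^S z$. The singleton partition is $\{\{i\}:i\in N\}$. An IS deviation of agent $i$ from partition $\pi$ to $\pi'$ is a move of $i$ alone from $\pi(i)$ into another coalition of $\pi$ or into a new singleton such that $\pi'(i)\succ_i\pi(i)$ and $\pi'(j)\succsim_j\pi(j)$ for every $j\in\pi'(i)\setminus\{i\}$. *)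

theory Defs
  imports Main "HOL-Library.Disjoint_Sets"
begin

text \<open>An anonymous hedonic game is given by, for each agent i,
  a relation R i on sizes {1..n}; (x, y) \<in> R i means that agent i weakly prefers
  coalitions of size x to coalitions of size y.\<close>

definition agents :: "nat \<Rightarrow> nat set" where
  "agents n = {1..n}"

definition strict_AHG :: "nat \<Rightarrow> (nat \<Rightarrow> (nat \<times> nat) set) \<Rightarrow> bool" where
  "strict_AHG n R \<longleftrightarrow> (\<forall>i\<in>agents n. linear_order_on {1..n} (R i))"

definition size_weak :: "(nat \<Rightarrow> (nat \<times> nat) set) \<Rightarrow> nat \<Rightarrow> nat \<Rightarrow> nat \<Rightarrow> bool" where
  "size_weak R i x y \<longleftrightarrow> (x, y) \<in> R i"

definition size_strict :: "(nat \<Rightarrow> (nat \<times> nat) set) \<Rightarrow> nat \<Rightarrow> nat \<Rightarrow> nat \<Rightarrow> bool" where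
  "size_strict R i x y \<longleftrightarrow> (x, y) \<in> R i \<and> (y, x) \<notin> R i"

text \<open>Generally single-peaked: there is a linear order L on {1..n} (where (a,b) \<in> L reads
  a \<le>_L b) such that whenever y lies strictly between x and z in L, x \<succ>_i y implies
  y \<succeq>_i z.\<close>
definition gen_single_peaked :: "nat \<Rightarrow> (nat \<Rightarrow> (nat \<times> nat) set) \<Rightarrow> bool" where
  "gen_single_peaked n R \<longleftrightarrow>
     (\<exists>L. linear_order_on {1..n} L \<and>
        (\<forall>i\<in>agents n. \<forall>x\<in>{1..n}. \<forall>y\<in>{1..n}. \<forall>z\<in>{1..n}.
           (((y, x) \<in> L \<and> y \<noteq> x \<and> (z, y) \<in> L \<and> z \<noteq> y) \<or>
            ((x, y) \<in> L \<and> x \<noteq> y \<and> (y, z) \<in> L \<and> y \<noteq> z)) \<longrightarrow>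
           size_strict R i x y \<longrightarrow> size_weak R i y z))"

definition coalition_of :: "nat set set \<Rightarrow> nat \<Rightarrow> nat set" where
  "coalition_of \<pi> i = (THE S. S \<in> \<pi> \<and> i \<in> S)"

definition coal_weak :: "(nat \<Rightarrow> (nat \<times> nat) set) \<Rightarrow> nat \<Rightarrow> nat set \<Rightarrow> nat set \<Rightarrow> bool" where
  "coal_weak R i S T \<longleftrightarrow> size_weak R i (card S) (card T)"

definition coal_strict :: "(nat \<Rightarrow> (nat \<times> nat) set) \<Rightarrow> nat \<Rightarrow> nat set \<Rightarrow> nat set \<Rightarrow> bool" where
  "coal_strict R i S T \<longleftrightarrow> size_strict R i (card S) (card T)"

text \<open>IS deviation from partition \<pi> to \<pi>': some agent i leaves its coalition and joins
  another coalition T of \<pi> or a new singleton (T = {}); i strictly improves and every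
  member of T weakly improves.\<close>
definition IS_deviation :: "nat \<Rightarrow> (nat \<Rightarrow> (nat \<times> nat) set) \<Rightarrow> nat set set \<Rightarrow> nat set set \<Rightarrow> bool" where
  "IS_deviation n R \<pi> \<pi>' \<longleftrightarrow>
     partition_on (agents n) \<pi> \<and>
     (\<exists>i\<in>agents n. \<exists>T\<in>insert {} \<pi>. i \<notin> T \<and>
        \<pi>' = ((\<pi> - {coalition_of \<pi> i, T}) \<union> {coalition_of \<pi> i - {i}, insert i T}) - {{}} \<and>
        coal_strict R i (insert i T) (coalition_of \<pi> i) \<and>
        (\<forall>j\<in>T. coal_weak R j (insert i T) T))"

definition singleton_partition :: "nat \<Rightarrow> nat set set" where
  "singleton_partition n = (\<lambda>i. {i}) ` agents n"

definition grand_coalition :: "nat \<Rightarrow> nat set set" where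
  "grand_coalition n = {agents n}"

end

theory Submission imports Defs begin

definition rkl :: "nat \<Rightarrow> nat list" where
  "rkl i = (if i = 1 then [6, 0, 1, 3, 2, 4, 5] else if i = 2 then [3, 2, 1, 4, 0, 5, 6]
    else if i = 3 then [6, 4, 3, 1, 0, 2, 5] else if i = 4 then [5, 4, 2, 1, 0, 3, 6]
    else if i = 5 then [6, 5, 3, 1, 0, 2, 4] else if i = 6 then [4, 1, 0, 3, 2, 5, 6]
    else [4, 3, 1, 2, 0, 5, 6])"

definition rk :: "nat \<Rightarrow> nat \<Rightarrow> nat" where "rk i s = rkl i ! (s - 1)"

definition RR :: "nat \<Rightarrow> (nat \<times> nat) set" where
  "RR i = {(x, y). x \<in> {1..7} \<and> y \<in> {1..7} \<and> rk i x \<le> rk i y}"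

definition lp :: "nat \<Rightarrow> nat" where "lp s = [0, 1, 2, 4, 3, 5, 6] ! (s - 1)"

definition LL :: "(nat \<times> nat) set" where
  "LL = {(x, y). x \<in> {1..7} \<and> y \<in> {1..7} \<and> lp x \<le> lp y}"

lemma lin_of_inj:
  assumes "inj_on f A"
  shows "linear_order_on A {(x, y). x \<in> A \<and> y \<in> A \<and> (f x :: nat) \<le> f y}"
  using assms
  unfolding linear_order_on_def partial_order_on_def preorder_on_def refl_on_def trans_def
    antisym_def total_on_def inj_on_def
  by auto

lemma set7: "{1..7::nat} = set [1..<8]" by code_simp

lemma inj_of_distinct: "distinct (map f [1..<8]) \<Longrightarrow> inj_on f {1..7::nat}"
  unfolding set7 by (simp add: distinct_map)

lemma inj_rk: "i \<in> {1..7} \<Longrightarrow> inj_on (rk i) {1..7}"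
proof -
  have "\<forall>i\<in>set [1..<8]. distinct (map (rk i) [1..<8])"
    unfolding rk_def rkl_def by code_simp
  then show "i \<in> {1..7} \<Longrightarrow> inj_on (rk i) {1..7}"
    using inj_of_distinct unfolding set7 by blast
qed

lemma strict: "strict_AHG 7 RR"
  unfolding strict_AHG_def RR_def agents_def using lin_of_inj[OF inj_rk] by blast

lemma sw: "x \<in> {1..7} \<Longrightarrow> y \<in> {1..7} \<Longrightarrow> size_weak RR i x y \<longleftrightarrow> rk i x \<le> rk i y"
  by (simp add: size_weak_def RR_def)
lemma ss: "x \<in> {1..7} \<Longrightarrow> y \<in> {1..7} \<Longrightarrow> size_strict RR i x y \<longleftrightarrow> rk i x < rk i y"
  by (auto simp: size_strict_def RR_def)

lemma gsp: "gen_single_peaked 7 RR"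
  unfolding gen_single_peaked_def
proof (intro exI conjI)
  show "linear_order_on {1..7} LL" unfolding LL_def
    by (rule lin_of_inj) (rule inj_of_distinct, unfold lp_def, code_simp)
  have "\<forall>i\<in>set [1..<8]. \<forall>x\<in>set [1..<8]. \<forall>y\<in>set [1..<8]. \<forall>z\<in>set [1..<8].
          ((lp y \<le> lp x \<and> y \<noteq> x \<and> lp z \<le> lp y \<and> z \<noteq> y) \<or>
           (lp x \<le> lp y \<and> x \<noteq> y \<and> lp y \<le> lp z \<and> y \<noteq> z)) \<longrightarrow>
          rk i x < rk i y \<longrightarrow> rk i y \<le> rk i z"
    unfolding lp_def rk_def rkl_def by code_simp
  note H = this[unfolded set7[symmetric]]
  show "\<forall>i\<in>agents 7. \<forall>x\<in>{1..7}. \<forall>y\<in>{1..7}. \<forall>z\<in>{1..7}.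
           (((y, x) \<in> LL \<and> y \<noteq> x \<and> (z, y) \<in> LL \<and> z \<noteq> y) \<or>
            ((x, y) \<in> LL \<and> x \<noteq> y \<and> (y, z) \<in> LL \<and> y \<noteq> z)) \<longrightarrow>
           size_strict RR i x y \<longrightarrow> size_weak RR i y z"
    unfolding agents_def
  proof (intro ballI)
    fix i x y z assume a: "i \<in> {1..7::nat}" "x \<in> {1..7::nat}" "y \<in> {1..7::nat}" "z \<in> {1..7::nat}"
    have h: "((lp y \<le> lp x \<and> y \<noteq> x \<and> lp z \<le> lp y \<and> z \<noteq> y) \<or>
           (lp x \<le> lp y \<and> x \<noteq> y \<and> lp y \<le> lp z \<and> y \<noteq> z)) \<longrightarrow>
          rk i x < rk i y \<longrightarrow> rk i y \<le> rk i z"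
      using H a by blast
    show "(((y, x) \<in> LL \<and> y \<noteq> x \<and> (z, y) \<in> LL \<and> z \<noteq> y) \<or>
            ((x, y) \<in> LL \<and> x \<noteq> y \<and> (y, z) \<in> LL \<and> y \<noteq> z)) \<longrightarrow>
           size_strict RR i x y \<longrightarrow> size_weak RR i y z"
      using h a by (simp add: LL_def ss sw)
  qed
qed

lemma coal_eq:
  assumes "partition_on A \<pi>" "S \<in> \<pi>" "i \<in> S"
  shows "coalition_of \<pi> i = S"
  unfolding coalition_of_def
proof (rule the_equality)
  show "S \<in> \<pi> \<and> i \<in> S" using assms by blast
next
  fix S' assume "S' \<in> \<pi> \<and> i \<in> S'"
  then show "S' = S" using assms partition_onD2[OF assms(1)] disjointD by blast
qed

lemma IS_intro:
  assumes "size_strict R i (card (insert i T)) (card S)"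
    "\<forall>j\<in>T. size_weak R j (card (insert i T)) (card T)"
    "\<Union>\<pi> = {1..n}" "\<forall>A\<in>\<pi>. \<forall>B\<in>\<pi>. A \<noteq> B \<longrightarrow> A \<inter> B = {}" "{} \<notin> \<pi>"
    "S \<in> \<pi>" "i \<in> S" "i \<in> {1..n}" "T \<in> insert {} \<pi>" "i \<notin> T"
    "\<pi>' = ((\<pi> - {S, T}) \<union> {S - {i}, insert i T}) - {{}}"
  shows "IS_deviation n R \<pi> \<pi>'"
proof -
  have p: "partition_on (agents n) \<pi>"
    unfolding agents_def
  proof (rule partition_onI)
    fix p q assume "p \<in> \<pi>" "q \<in> \<pi>" "p \<noteq> q"
    then show "disjnt p q" using assms(4) unfolding disjnt_def by blast
  qed (use assms(3,5) in auto)
  have c: "coalition_of \<pi> i = S" using coal_eq[OF p assms(6,7)] .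
  have "\<exists>i'\<in>agents n. \<exists>T'\<in>insert {} \<pi>. i' \<notin> T' \<and>
        \<pi>' = ((\<pi> - {coalition_of \<pi> i', T'}) \<union> {coalition_of \<pi> i' - {i'}, insert i' T'}) - {{}} \<and>
        coal_strict R i' (insert i' T') (coalition_of \<pi> i') \<and>
        (\<forall>j\<in>T'. coal_weak R j (insert i' T') T')"
  proof (rule bexI[where x=i], rule bexI[where x=T])
    show "i \<notin> T \<and>
        \<pi>' = ((\<pi> - {coalition_of \<pi> i, T}) \<union> {coalition_of \<pi> i - {i}, insert i T}) - {{}} \<and>
        coal_strict R i (insert i T) (coalition_of \<pi> i) \<and>
        (\<forall>j\<in>T. coal_weak R j (insert i T) T)"
      unfolding c coal_strict_def coal_weak_def using assms(1,2,10,11) by blast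
    show "T \<in> insert {} \<pi>" by (rule assms(9))
    show "i \<in> agents n" unfolding agents_def by (rule assms(8))
  qed
  then show ?thesis unfolding IS_deviation_def using p by blast
qed

definition s0 :: "nat set set" where "s0 = {{1}, {2}, {3}, {4}, {5}, {6}, {7}}"

definition s1 :: "nat set set" where "s1 = {{1}, {2}, {3}, {4}, {5}, {6,7}}"

definition s2 :: "nat set set" where "s2 = {{1}, {2}, {3,5}, {4}, {6,7}}"

definition s3 :: "nat set set" where "s3 = {{1}, {2}, {3,4,5}, {6,7}}"

definition s4 :: "nat set set" where "s4 = {{1,3,4,5}, {2}, {6,7}}"

definition g0 :: "nat set set" where "g0 = {{1,2,3,4,5,6,7}}"

definition g1 :: "nat set set" where "g1 = {{1,2,3,4,5,7}, {6}}"

definition c0 :: "nat set set" where "c0 = {{1,2,3,4,5}, {6,7}}"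

definition c1 :: "nat set set" where "c1 = {{1,6,7}, {2,3,4,5}}"

definition c2 :: "nat set set" where "c2 = {{1,6,7}, {2}, {3,4,5}}"

definition c3 :: "nat set set" where "c3 = {{1,2}, {3,4,5}, {6,7}}"

definition c4 :: "nat set set" where "c4 = {{1}, {2,6,7}, {3,4,5}}"

definition c5 :: "nat set set" where "c5 = {{1,3,4,5}, {2,6,7}}"

lemma step_s0: "IS_deviation 7 RR s0 s1"
  unfolding s0_def s1_def
  by (rule IS_intro[where S="{7}" and i=7 and T="{6}"], simp add: ss sw rk_def rkl_def, simp add: ss sw rk_def rkl_def, code_simp+)

lemma step_s1: "IS_deviation 7 RR s1 s2"
  unfolding s1_def s2_def
  by (rule IS_intro[where S="{3}" and i=3 and T="{5}"], simp add: ss sw rk_def rkl_def, simp add: ss sw rk_def rkl_def, code_simp+)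

lemma step_s2: "IS_deviation 7 RR s2 s3"
  unfolding s2_def s3_def
  by (rule IS_intro[where S="{4}" and i=4 and T="{3,5}"], simp add: ss sw rk_def rkl_def, simp add: ss sw rk_def rkl_def, code_simp+)

lemma step_s3: "IS_deviation 7 RR s3 s4"
  unfolding s3_def s4_def
  by (rule IS_intro[where S="{1}" and i=1 and T="{3,4,5}"], simp add: ss sw rk_def rkl_def, simp add: ss sw rk_def rkl_def, code_simp+)

lemma step_s4: "IS_deviation 7 RR s4 c0"
  unfolding s4_def c0_def
  by (rule IS_intro[where S="{2}" and i=2 and T="{1,3,4,5}"], simp add: ss sw rk_def rkl_def, simp add: ss sw rk_def rkl_def, code_simp+)

lemma step_g0: "IS_deviation 7 RR g0 g1"
  unfolding g0_def g1_def
  by (rule IS_intro[where S="{1,2,3,4,5,6,7}" and i=6 and T="{}"], simp add: ss sw rk_def rkl_def, simp add: ss sw rk_def rkl_def, code_simp+)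

lemma step_g1: "IS_deviation 7 RR g1 c0"
  unfolding g1_def c0_def
  by (rule IS_intro[where S="{1,2,3,4,5,7}" and i=7 and T="{6}"], simp add: ss sw rk_def rkl_def, simp add: ss sw rk_def rkl_def, code_simp+)

lemma step_c0: "IS_deviation 7 RR c0 c1"
  unfolding c0_def c1_def
  by (rule IS_intro[where S="{1,2,3,4,5}" and i=1 and T="{6,7}"], simp add: ss sw rk_def rkl_def, simp add: ss sw rk_def rkl_def, code_simp+)

lemma step_c1: "IS_deviation 7 RR c1 c2"
  unfolding c1_def c2_def
  by (rule IS_intro[where S="{2,3,4,5}" and i=2 and T="{}"], simp add: ss sw rk_def rkl_def, simp add: ss sw rk_def rkl_def, code_simp+)

lemma step_c2: "IS_deviation 7 RR c2 c3"
  unfolding c2_def c3_def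
  by (rule IS_intro[where S="{1,6,7}" and i=1 and T="{2}"], simp add: ss sw rk_def rkl_def, simp add: ss sw rk_def rkl_def, code_simp+)

lemma step_c3: "IS_deviation 7 RR c3 c4"
  unfolding c3_def c4_def
  by (rule IS_intro[where S="{1,2}" and i=2 and T="{6,7}"], simp add: ss sw rk_def rkl_def, simp add: ss sw rk_def rkl_def, code_simp+)

lemma step_c4: "IS_deviation 7 RR c4 c5"
  unfolding c4_def c5_def
  by (rule IS_intro[where S="{1}" and i=1 and T="{3,4,5}"], simp add: ss sw rk_def rkl_def, simp add: ss sw rk_def rkl_def, code_simp+)

lemma step_c5: "IS_deviation 7 RR c5 c0"
  unfolding c5_def c0_def
  by (rule IS_intro[where S="{2,6,7}" and i=2 and T="{1,3,4,5}"], simp add: ss sw rk_def rkl_def, simp add: ss sw rk_def rkl_def, code_simp+)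


lemma less_11: "(j::nat) < 11 \<Longrightarrow> j = 0 \<or> j = 1 \<or> j = 2 \<or> j = 3 \<or> j = 4 \<or> j = 5 \<or> j = 6 \<or> j = 7 \<or> j = 8 \<or> j = 9 \<or> j = 10"
  by presburger
lemma less_8: "(j::nat) < 8 \<Longrightarrow> j = 0 \<or> j = 1 \<or> j = 2 \<or> j = 3 \<or> j = 4 \<or> j = 5 \<or> j = 6 \<or> j = 7"
  by presburger

lemma lasso:
  assumes "Ps ! 0 = s" "0 < length Ps"
    "\<forall>j<length Ps. nxt j < length Ps \<and> IS_deviation n R (Ps ! j) (Ps ! nxt j)"
  shows "\<exists>seq :: nat \<Rightarrow> nat set set. seq 0 = s \<and> (\<forall>k. IS_deviation n R (seq k) (seq (Suc k)))"
proof -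
  have inv: "(nxt ^^ k) 0 < length Ps" for k by (induction k) (use assms in auto)
  show ?thesis
    by (rule exI[where x="\<lambda>k. Ps ! ((nxt ^^ k) 0)"]) (use assms inv in auto)
qed

lemma seqS: "\<exists>seq :: nat \<Rightarrow> nat set set. seq 0 = singleton_partition 7 \<and>
        (\<forall>k. IS_deviation 7 RR (seq k) (seq (Suc k)))"
proof (rule lasso[where Ps="[s0,s1,s2,s3,s4,c0,c1,c2,c3,c4,c5]" and nxt="\<lambda>j. if j < 10 then Suc j else 5"])
  show "[s0,s1,s2,s3,s4,c0,c1,c2,c3,c4,c5] ! 0 = singleton_partition 7"
    unfolding s0_def singleton_partition_def agents_def by code_simp
  show "\<forall>j<length [s0,s1,s2,s3,s4,c0,c1,c2,c3,c4,c5]. (if j < 10 then Suc j else 5) < length [s0,s1,s2,s3,s4,c0,c1,c2,c3,c4,c5] \<and>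
    IS_deviation 7 RR ([s0,s1,s2,s3,s4,c0,c1,c2,c3,c4,c5] ! j) ([s0,s1,s2,s3,s4,c0,c1,c2,c3,c4,c5] ! (if j < 10 then Suc j else 5))"
  proof (intro allI impI)
    fix j assume "j < length [s0,s1,s2,s3,s4,c0,c1,c2,c3,c4,c5]"
    then have "j < 11" by simp
    then show "(if j < 10 then Suc j else 5) < length [s0,s1,s2,s3,s4,c0,c1,c2,c3,c4,c5] \<and>
    IS_deviation 7 RR ([s0,s1,s2,s3,s4,c0,c1,c2,c3,c4,c5] ! j) ([s0,s1,s2,s3,s4,c0,c1,c2,c3,c4,c5] ! (if j < 10 then Suc j else 5))"
      using less_11[OF \<open>j < 11\<close>] by (elim disjE) (simp_all add: step_s0 step_s1 step_s2 step_s3 step_s4 step_c0 step_c1 step_c2 step_c3 step_c4 step_c5)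
  qed
qed simp

lemma seqG: "\<exists>seq :: nat \<Rightarrow> nat set set. seq 0 = grand_coalition 7 \<and>
        (\<forall>k. IS_deviation 7 RR (seq k) (seq (Suc k)))"
proof (rule lasso[where Ps="[g0,g1,c0,c1,c2,c3,c4,c5]" and nxt="\<lambda>j. if j < 7 then Suc j else 2"])
  show "[g0,g1,c0,c1,c2,c3,c4,c5] ! 0 = grand_coalition 7"
    unfolding g0_def grand_coalition_def agents_def by code_simp
  show "\<forall>j<length [g0,g1,c0,c1,c2,c3,c4,c5]. (if j < 7 then Suc j else 2) < length [g0,g1,c0,c1,c2,c3,c4,c5] \<and>
    IS_deviation 7 RR ([g0,g1,c0,c1,c2,c3,c4,c5] ! j) ([g0,g1,c0,c1,c2,c3,c4,c5] ! (if j < 7 then Suc j else 2))"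
  proof (intro allI impI)
    fix j assume "j < length [g0,g1,c0,c1,c2,c3,c4,c5]"
    then have "j < 8" by simp
    then show "(if j < 7 then Suc j else 2) < length [g0,g1,c0,c1,c2,c3,c4,c5] \<and>
    IS_deviation 7 RR ([g0,g1,c0,c1,c2,c3,c4,c5] ! j) ([g0,g1,c0,c1,c2,c3,c4,c5] ! (if j < 7 then Suc j else 2))"
      using less_8[OF \<open>j < 8\<close>] by (elim disjE) (simp_all add: step_g0 step_g1 step_c0 step_c1 step_c2 step_c3 step_c4 step_c5)
  qed
qed simp

theorem proposition3p2:
  shows "\<exists>R. strict_AHG 7 R \<and> gen_single_peaked 7 R \<and>
    (\<exists>seq :: nat \<Rightarrow> nat set set. seq 0 = singleton_partition 7 \<and>
        (\<forall>k. IS_deviation 7 R (seq k) (seq (Suc k)))) \<and>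
    (\<exists>seq :: nat \<Rightarrow> nat set set. seq 0 = grand_coalition 7 \<and>
        (\<forall>k. IS_deviation 7 R (seq k) (seq (Suc k))))"
  using strict gsp seqS seqG by blast

end
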